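(* Let $\alpha\in\mathbb{F}_q^*$ and let $\mu\in\mathbb{F}_q[X]\cap\mathbb{F}[X]^0$ be of degree $d$. (a) Suppose $\mu=\mu^{*\alpha}$. If $\zeta^2\ne\alpha$ for every root $\zeta\in\mathbb{F}$ of $\mu$, then $d=2e$ is even and the product of the roots of $\mu$ equals $\alpha^e$. If $\mu=\mu^{*\alpha}$ and $\mu$ is irreducible in $\mathbb{F}_q[X]$, then one of the following occurs: (I) there is $\zeta\in\mathbb{F}_q$ with $\alpha=\zeta^2$, $\mu=X-\zeta$ and $\mu'=X+\zeta$; (II) there is $\zeta\in\mathbb{F}_{q^2}\setminus\mathbb{F}_q$ with $\alpha=\zeta^2$ and $\mu=X^2-\alpha=\mu'$; (III) there is $\zeta\in\mathbb{F}_{q^2}\setminus\mathbb{F}_q$ with $\alpha=-\zeta^2$ and $\mu=X^2+\alpha=\mu'$; (IV) for all roots $\zeta\in\mathbb{F}$ of $\mu$ we have $\alpha\ne\pm\zeta^2$; in this case $d=2e$ is even, $\zeta^{q^e}=\alpha\zeta^{-1}$ for each root $\zeta$, and $\mu\ne\mu'$ if $q$ is odd. Cases (II) and (III) only occur if $q$ is odd. (b) If $\mu$ is irreducible, $d$ and $q$ are odd, and $\mu'=\mu^{*\alpha}$, then $-\alpha$ is a square in $\mathbb{F}_q$.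
   Context: $\mathbb{F}$ is an algebraic closure of $\mathbb{F}_p$ and $q$ is a power of $p$. $\mathbb{F}[X]^0$ is the set of monic separable polynomials over $\mathbb{F}$ with non-zero constant coefficient. For $\mu\in\mathbb{F}[X]^0$: $\mu'$ is the element of $\mathbb{F}[X]^0$ whose roots are the negatives of the roots of $\mu$; $\mu^{*\alpha}$ is the element of $\mathbb{F}[X]^0$ whose roots are $\alpha\zeta^{-1}$ for the roots $\zeta$ of $\mu$. *)

theory Defs
  imports "HOL-Computational_Algebra.Computational_Algebra"
begin

text \<open>The field F: an algebraic closure of F_p (type 'a of characteristic p,
algebraically closed, and algebraic over F_p, i.e. every element lies in some
finite subfield F_{p^k}).\<close>
definition alg_closure_of_Fp :: "('a::field) itself \<Rightarrow> nat \<Rightarrow> bool" where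
  "alg_closure_of_Fp (T :: 'a itself) p \<longleftrightarrow>
     prime p \<and> CHAR('a) = p \<and>
     (\<forall>f :: 'a poly. degree f > 0 \<longrightarrow> (\<exists>x. poly f x = 0)) \<and>
     (\<forall>x :: 'a. \<exists>k>0. x ^ (p ^ k) = x)"

text \<open>The subfield F_q of F (q a power of the characteristic).\<close>
definition Fq :: "nat \<Rightarrow> 'a::field set" where
  "Fq q = {x. x ^ q = x}"

definition poly_over :: "nat \<Rightarrow> 'a::field poly \<Rightarrow> bool" where
  "poly_over q f \<longleftrightarrow> (\<forall>i. coeff f i \<in> Fq q)"

definition separable_poly :: "'a::field poly \<Rightarrow> bool" where
  "separable_poly f \<longleftrightarrow> coprime f (pderiv f)"

definition FX0 :: "'a::field poly set" where
  "FX0 = {f. lead_coeff f = 1 \<and> separable_poly f \<and> coeff f 0 \<noteq> 0}"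

definition roots :: "'a::field poly \<Rightarrow> 'a set" where
  "roots f = {x. poly f x = 0}"

definition mu_neg :: "'a::field poly \<Rightarrow> 'a poly" where
  "mu_neg f = (\<Prod>z\<in>roots f. [:z, 1:])"

definition mu_star :: "'a::field \<Rightarrow> 'a poly \<Rightarrow> 'a poly" where
  "mu_star a f = (\<Prod>z\<in>roots f. [:- (a / z), 1:])"

definition irreducible_over :: "nat \<Rightarrow> 'a::field poly \<Rightarrow> bool" where
  "irreducible_over q f \<longleftrightarrow> poly_over q f \<and> degree f > 0 \<and>
     (\<forall>g h. poly_over q g \<longrightarrow> poly_over q h \<longrightarrow> f = g * h \<longrightarrow>
        degree g = 0 \<or> degree h = 0)"

end

theory Submission
  imports Defs
begin

context
  fixes p q n :: nat
  assumes pr: "prime p" and ch: "CHAR('a::field) = p" and qd: "q = p ^ n"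
begin

lemma frob_add: "((x::'a) + y) ^ q = x ^ q + y ^ q"
  using freshmans_dream'[of "p^n" n x y] pr ch qd by simp

lemma q_pos: "q > 0" using pr qd prime_gt_0_nat by simp

lemma frob_neg: "(- (x::'a)) ^ q = - (x ^ q)"
proof -
  have "(x + (-x)) ^ q = x ^ q + (-x) ^ q" by (rule frob_add)
  then have "0 = x ^ q + (-x) ^ q" using q_pos by (simp add: power_0_left)
  then show ?thesis by (simp add: eq_neg_iff_add_eq_0 add.commute)
qed

lemma frob_diff: "((x::'a) - y) ^ q = x ^ q - y ^ q"
  using frob_add[of x "-y"] frob_neg[of y] by simp

lemma frob_sum: "(sum (f::'b \<Rightarrow> 'a) A) ^ q = sum (\<lambda>i. f i ^ q) A"
  using freshmans_dream_sum'[of "p^n" n f A] pr ch qd by simp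

lemma frob_inj: "(x::'a) ^ q = y ^ q \<Longrightarrow> x = y"
  using frob_diff[of x y] q_pos by simp

lemma frob_iter_add: "((x::'a) + y) ^ (q ^ m) = x ^ (q ^ m) + y ^ (q ^ m)"
proof (induction m)
  case (Suc m) then show ?case by (simp add: power_mult frob_add mult.commute[of q])
qed simp

lemma frob_iter_neg: "(- (x::'a)) ^ (q ^ m) = - (x ^ (q ^ m))"
proof (induction m)
  case (Suc m) then show ?case by (simp add: power_mult frob_neg mult.commute[of q])
qed simp

definition frobp :: "'a poly \<Rightarrow> 'a poly" where
  "frobp f = map_poly (\<lambda>c. c ^ q) f"

lemma coeff_frobp: "coeff (frobp f) i = (coeff f i) ^ q"
  unfolding frobp_def using q_pos by (simp add: coeff_map_poly power_0_left)

lemma frobp_mult: "frobp (f * g) = frobp f * frobp g"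
proof (rule poly_eqI)
  fix i
  show "coeff (frobp (f * g)) i = coeff (frobp f * frobp g) i"
    by (simp add: coeff_frobp coeff_mult frob_sum power_mult_distrib)
qed

lemma frobp_one: "frobp 1 = 1"
  unfolding frobp_def by simp

lemma frobp_prod: "frobp (prod g A) = (\<Prod>x\<in>A. frobp (g x))"
  by (induction A rule: infinite_finite_induct) (auto simp: frobp_one frobp_mult)

lemma frobp_lin: "frobp [:- w, 1:] = [:- (w ^ q), 1:]"
  using q_pos by (intro poly_eqI) (auto simp: coeff_frobp coeff_pCons frob_neg power_0_left split: nat.splits)

lemma poly_over_frobp: "poly_over q f \<longleftrightarrow> frobp f = f"
  unfolding poly_over_def Fq_def by (auto simp: poly_eq_iff coeff_frobp)

lemma poly_frob: assumes "poly_over q (f::'a poly)" shows "poly f (x ^ q) = (poly f x) ^ q"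
proof -
  have c: "coeff f i ^ q = coeff f i" for i using assms unfolding poly_over_def Fq_def by auto
  have "(poly f x) ^ q = (\<Sum>i\<le>degree f. (coeff f i * x ^ i) ^ q)"
    unfolding poly_altdef using frob_sum[of "\<lambda>i. coeff f i * x ^ i" "{..degree f}"] by simp
  also have "\<dots> = (\<Sum>i\<le>degree f. coeff f i * (x ^ q) ^ i)"
    by (simp add: power_mult_distrib c flip: power_mult) (simp add: mult.commute)
  finally show ?thesis by (simp add: poly_altdef)
qed

end

lemma roots_finite: "(f::'a::field poly) \<noteq> 0 \<Longrightarrow> finite (roots f)"
  unfolding roots_def by (rule poly_roots_finite)

lemma prod_lin_dvd:
  fixes f :: "'a::field poly"
  assumes "finite S" "S \<subseteq> roots f"
  shows "(\<Prod>r\<in>S. [:- r, 1:]) dvd f"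
  using assms
proof (induction S rule: finite_induct)
  case empty then show ?case by simp
next
  case (insert a S)
  then obtain g where g: "f = (\<Prod>r\<in>S. [:- r, 1:]) * g" by (auto elim: dvdE)
  have "poly (\<Prod>r\<in>S. [:- r, 1:]) a \<noteq> 0" using insert by (auto simp: poly_prod)
  moreover have "poly f a = 0" using insert by (auto simp: roots_def)
  ultimately have "poly g a = 0" using g by simp
  then have "[:- a, 1:] dvd g" by (simp add: poly_eq_0_iff_dvd)
  then have "[:- a, 1:] * (\<Prod>r\<in>S. [:- r, 1:]) dvd g * (\<Prod>r\<in>S. [:- r, 1:])"
    by (rule mult_dvd_mono) simp
  then show ?case by (simp only: prod.insert[OF insert(1,2)] g mult.commute)
qed

lemma split_poly:
  fixes f :: "'a::field poly"
  assumes AC: "\<forall>g::'a poly. degree g > 0 \<longrightarrow> (\<exists>x. poly g x = 0)" and f: "f \<in> FX0"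
  shows "f = (\<Prod>r\<in>roots f. [:- r, 1:])"
proof -
  have f0: "f \<noteq> 0" using f by (auto simp: FX0_def)
  have fin: "finite (roots f)" using f0 by (rule roots_finite)
  define P where "P = (\<Prod>r\<in>roots f. [:- r, 1:])"
  have "P dvd f" unfolding P_def using fin by (intro prod_lin_dvd) auto
  then obtain h where h: "f = P * h" by (auto elim: dvdE)
  have "degree h = 0"
  proof (rule ccontr)
    assume "degree h \<noteq> 0"
    then obtain r where r: "poly h r = 0" using AC by auto
    then have "r \<in> roots f" using h by (simp add: roots_def)
    then have "[:- r, 1:] dvd P" unfolding P_def using fin by (intro dvd_prodI) auto
    moreover have "[:- r, 1:] dvd h" using r by (simp add: poly_eq_0_iff_dvd)
    ultimately obtain k where k: "f = [:- r, 1:] * [:- r, 1:] * k" using h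
      by (metis dvd_def mult.assoc mult.left_commute)
    have "pderiv f = [:- r, 1:] * (pderiv [:- r, 1:] * k + pderiv ([:- r, 1:] * k))"
      unfolding k mult.assoc pderiv_mult[of "[:- r, 1:]" "[:- r, 1:] * k"] by (simp add: algebra_simps)
    then have d1: "[:- r, 1:] dvd pderiv f" by (simp only: dvd_triv_left)
    have d2: "[:- r, 1:] dvd f" unfolding k mult.assoc by (rule dvd_triv_left)
    have "coprime f (pderiv f)" using f by (auto simp: FX0_def separable_poly_def)
    then have "is_unit [:- r, 1:]" using d1 d2 coprime_common_divisor by blast
    then show False by (simp add: is_unit_iff_degree)
  qed
  then obtain c where c: "h = [:c:]" by (metis degree_eq_zeroE)
  have "lead_coeff P = 1" unfolding P_def by (simp add: lead_coeff_prod)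
  moreover have "lead_coeff f = 1" using f by (auto simp: FX0_def)
  ultimately have "c = 1" using h c by (cases "c = 0") (auto simp: lead_coeff_mult)
  then show ?thesis using h c P_def by simp
qed

lemma degree_prod_lin: "finite S \<Longrightarrow> degree (\<Prod>r\<in>S. [:- (r::'a::field), 1:]) = card S"
  by (simp add: degree_prod_eq_sum_degree)

lemma split_card:
  fixes f :: "'a::field poly"
  assumes AC: "\<forall>g::'a poly. degree g > 0 \<longrightarrow> (\<exists>x. poly g x = 0)" and f: "f \<in> FX0"
  shows "degree f = card (roots f)"
proof -
  have "f \<noteq> 0" using f by (auto simp: FX0_def)
  then have "finite (roots f)" by (rule roots_finite)
  then show ?thesis using split_poly[OF AC f] degree_prod_lin by metis
qed


context
  fixes p q n :: nat
  assumes pr: "prime p" and ch: "CHAR('a::field) = p" and qd: "q = p ^ n"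
begin

lemma fr_add: "(z::'a) ^ (q ^ (a + b)) = (z ^ (q ^ a)) ^ (q ^ b)"
  by (simp add: power_add power_mult)

lemma fr_Suc: "(w::'a) ^ (q ^ Suc i) = (w ^ (q ^ i)) ^ q"
  by (simp add: power_mult[symmetric] mult.commute)

lemma fr_inj: "(x::'a) ^ (q ^ i) = y ^ (q ^ i) \<Longrightarrow> x = y"
proof (induction i)
  case (Suc i)
  have "(x ^ (q ^ i)) ^ q = (y ^ (q ^ i)) ^ q" using Suc.prems by (simp only: fr_Suc)
  then show ?case using Suc.IH frob_inj[OF pr ch qd] by blast
qed simp

lemma fr_mult_period: "(z::'a) ^ (q ^ m) = z \<Longrightarrow> z ^ (q ^ (m * t)) = z"
proof (induction t)
  case (Suc t)
  have "z ^ (q ^ (m * Suc t)) = (z ^ (q ^ (m * t))) ^ (q ^ m)"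
    using fr_add[of z "m * t" m] by (simp add: add.commute)
  then show ?case using Suc by simp
qed simp

lemma fr_period_dvd:
  assumes "(z::'a) ^ (q ^ m) = z" "\<forall>j. 0 < j \<and> j < m \<longrightarrow> z ^ (q ^ j) \<noteq> z" "m > 0"
  shows "z ^ (q ^ j) = z \<longleftrightarrow> m dvd j"
proof
  assume h: "z ^ (q ^ j) = z"
  have "j = m * (j div m) + j mod m" by simp
  then have "z ^ (q ^ j) = (z ^ (q ^ (m * (j div m)))) ^ (q ^ (j mod m))"
    by (metis fr_add)
  then have "z ^ (q ^ (j mod m)) = z" using h fr_mult_period[OF assms(1)] by simp
  then have "j mod m = 0" using assms(2,3) by (meson mod_less_divisor neq0_conv)
  then show "m dvd j" by auto
next
  assume "m dvd j"
  then show "z ^ (q ^ j) = z" using fr_mult_period[OF assms(1)] by auto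
qed

lemma Fq_iter: "(a::'a) \<in> Fq q \<Longrightarrow> a ^ (q ^ i) = a"
  unfolding Fq_def by (induction i) (auto simp: power_mult mult.commute[of q])

lemma poly_frob_iter: assumes "poly_over q (f::'a poly)" "poly f z = 0" shows "poly f (z ^ (q ^ i)) = 0"
proof (induction i)
  case 0 then show ?case using assms by simp
next
  case (Suc i)
  have "poly f (z ^ (q ^ Suc i)) = poly f ((z ^ (q ^ i)) ^ q)" by (simp only: fr_Suc)
  also have "\<dots> = (poly f (z ^ (q ^ i))) ^ q" by (rule poly_frob[OF pr ch qd assms(1)])
  finally show ?case using Suc q_pos[OF pr ch qd] by (simp add: power_0_left)
qed

lemma period_exists:
  assumes alg: "\<forall>x :: 'a. \<exists>k>0. x ^ (p ^ k) = x" and n: "n \<ge> 1"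
  shows "\<exists>k>0. (z::'a) ^ (q ^ k) = z"
proof -
  obtain k where k: "k > 0" "z ^ (p ^ k) = z" using alg by blast
  have "z ^ ((p ^ k) ^ j) = z" for j
  proof (induction j)
    case (Suc j) then show ?case using k by (simp add: power_mult mult.commute)
  qed simp
  then have "z ^ (q ^ k) = z" by (simp add: qd flip: power_mult) (metis mult.commute power_mult)
  then show ?thesis using k by blast
qed

end

context
  fixes p q n :: nat
  assumes pr: "prime p" and ch: "CHAR('a::field) = p" and qd: "q = p ^ n"
begin

lemma orbit:
  fixes \<mu> :: "'a poly" and z :: 'a
  assumes AC: "\<forall>g::'a poly. degree g > 0 \<longrightarrow> (\<exists>x. poly g x = 0)"
    and alg: "\<forall>x :: 'a. \<exists>k>0. x ^ (p ^ k) = x" and n: "n \<ge> 1"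
    and mu: "\<mu> \<in> FX0" and irr: "irreducible_over q \<mu>" and z: "poly \<mu> z = 0"
  shows "roots \<mu> = (\<lambda>i. z ^ (q ^ i)) ` {..<degree \<mu>}"
    and "\<forall>j. z ^ (q ^ j) = z \<longleftrightarrow> degree \<mu> dvd j"
proof -
  define m where "m = (LEAST m. m > 0 \<and> z ^ (q ^ m) = z)"
  have ex: "\<exists>k>0. z ^ (q ^ k) = z" by (rule period_exists[OF pr ch qd alg n])
  have m: "m > 0" "z ^ (q ^ m) = z" unfolding m_def using LeastI_ex[OF ex] by auto
  have mmin: "\<forall>j. 0 < j \<and> j < m \<longrightarrow> z ^ (q ^ j) \<noteq> z"
    unfolding m_def using not_less_Least by blast
  define Orb where "Orb = (\<lambda>i. z ^ (q ^ i)) ` {..<m}"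
  have inj: "inj_on (\<lambda>i. z ^ (q ^ i)) {..<m}"
  proof (rule inj_onI)
    fix i j assume ij: "i \<in> {..<m}" "j \<in> {..<m}" "z ^ (q ^ i) = z ^ (q ^ j)"
    show "i = j"
    proof (rule ccontr)
      assume "i \<noteq> j"
      then consider "i < j" | "j < i" by linarith
      then show False
      proof cases
        case 1
        have "(z ^ (q ^ (j - i))) ^ (q ^ i) = z ^ (q ^ i)"
          using ij(3) fr_add[OF pr ch qd, of z "j - i" i] 1 by simp
        then have "z ^ (q ^ (j - i)) = z" by (rule fr_inj[OF pr ch qd])
        then show False using mmin 1 ij by auto
      next
        case 2
        have "(z ^ (q ^ (i - j))) ^ (q ^ j) = z ^ (q ^ j)"
          using ij(3) fr_add[OF pr ch qd, of z "i - j" j] 2 by simp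
        then have "z ^ (q ^ (i - j)) = z" by (rule fr_inj[OF pr ch qd])
        then show False using mmin 2 ij by auto
      qed
    qed
  qed
  have cardOrb: "card Orb = m" unfolding Orb_def using inj by (simp add: card_image)
  have finOrb: "finite Orb" unfolding Orb_def by simp
  have mu0: "\<mu> \<noteq> 0" using mu by (auto simp: FX0_def)
  have muover: "poly_over q \<mu>" using irr by (simp add: irreducible_over_def)
  have Orbsub: "Orb \<subseteq> roots \<mu>"
    unfolding Orb_def roots_def using poly_frob_iter[OF pr ch qd muover z] by auto
  have finR: "finite (roots \<mu>)" using mu0 by (rule roots_finite)
  have zOrb: "z ^ (q ^ i) \<in> Orb" if "i < m" for i
    unfolding Orb_def by (rule image_eqI[where x=i]) (rule refl, use that in simp)
  have imgOrb: "(\<lambda>w. w ^ q) ` Orb = Orb"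
  proof
    show "(\<lambda>w. w ^ q) ` Orb \<subseteq> Orb"
    proof (rule image_subsetI)
      fix x assume "x \<in> Orb"
      then obtain i where i: "i < m" and x: "x = z ^ (q ^ i)" unfolding Orb_def by blast
      have e: "x ^ q = z ^ (q ^ Suc i)" unfolding x by (rule fr_Suc[OF pr ch qd, symmetric])
      show "x ^ q \<in> Orb"
      proof (cases "Suc i = m")
        case True
        then have "x ^ q = z ^ (q ^ m)" using e by (simp only:)
        also have "\<dots> = z ^ (q ^ 0)" using m(2) by (simp only: power_0 power_one_right)
        finally show ?thesis using zOrb[of 0] m(1) by (simp only:)
      next
        case False then have "Suc i < m" using i by simp
        then show ?thesis using zOrb[of "Suc i"] e by (simp only:)
      qed
    qed
  next
    show "Orb \<subseteq> (\<lambda>w. w ^ q) ` Orb"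
    proof
      fix x assume "x \<in> Orb"
      then obtain i where i: "i < m" and x: "x = z ^ (q ^ i)" unfolding Orb_def by blast
      show "x \<in> (\<lambda>w. w ^ q) ` Orb"
      proof (cases i)
        case 0
        have "x = z ^ (q ^ m)" using x 0 m(2) by (simp only: power_0 power_one_right)
        also have "z ^ (q ^ m) = z ^ (q ^ Suc (m - 1))" using m(1) by (metis Suc_diff_1)
        also have "\<dots> = (z ^ (q ^ (m - 1))) ^ q" by (rule fr_Suc[OF pr ch qd])
        finally have "x = (z ^ (q ^ (m - 1))) ^ q" .
        moreover have "z ^ (q ^ (m - 1)) \<in> Orb" using zOrb m(1) by simp
        ultimately show ?thesis by (rule image_eqI)
      next
        case (Suc k)
        have "x = (z ^ (q ^ k)) ^ q" by (simp only: x Suc fr_Suc[OF pr ch qd])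
        moreover have "z ^ (q ^ k) \<in> Orb" using zOrb i Suc by simp
        ultimately show ?thesis by (rule image_eqI)
      qed
    qed
  qed
  have injq: "inj_on (\<lambda>w::'a. w ^ q) Orb" by (rule inj_onI) (rule frob_inj[OF pr ch qd])
  define g where "g = (\<Prod>r\<in>Orb. [:- r, 1:])"
  define h where "h = (\<Prod>r\<in>roots \<mu> - Orb. [:- r, 1:])"
  have muprod: "\<mu> = g * h"
  proof -
    have "\<mu> = (\<Prod>r\<in>roots \<mu>. [:- r, 1:])" by (rule split_poly[OF AC mu])
    also have "\<dots> = h * g"
      unfolding g_def h_def by (rule prod.subset_diff[OF Orbsub finR])
    finally show ?thesis by (simp only: mult.commute)
  qed
  have fg: "frobp q g = g"
  proof -
    have "frobp q g = (\<Prod>r\<in>Orb. frobp q [:- r, 1:])"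
      unfolding g_def by (rule frobp_prod[OF pr ch qd])
    also have "\<dots> = (\<Prod>r\<in>Orb. [:- (r ^ q), 1:])"
      by (rule prod.cong[OF refl], rule frobp_lin[OF pr ch qd])
    also have "\<dots> = (\<Prod>r\<in>(\<lambda>w. w ^ q) ` Orb. [:- r, 1:])"
      by (rule prod.reindex[OF injq, symmetric, unfolded comp_def])
    also have "\<dots> = g" unfolding imgOrb g_def ..
    finally show ?thesis .
  qed
  have g0: "g \<noteq> 0" unfolding g_def using finOrb by (simp add: prod_zero_iff)
  have "frobp q \<mu> = \<mu>" using muover poly_over_frobp[OF pr ch qd] by blast
  then have "frobp q g * frobp q h = g * h" using muprod frobp_mult[OF pr ch qd, of g h] by simp
  then have "g * frobp q h = g * h" using fg by simp
  then have fh: "frobp q h = h" using g0 by simp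
  have pg: "poly_over q g" using fg poly_over_frobp[OF pr ch qd] by blast
  have ph: "poly_over q h" using fh poly_over_frobp[OF pr ch qd] by blast
  have H: "\<forall>g h. poly_over q g \<longrightarrow> poly_over q h \<longrightarrow> \<mu> = g * h \<longrightarrow> degree g = 0 \<or> degree h = 0"
    using irr unfolding irreducible_over_def by (elim conjE)
  have "degree g = 0 \<or> degree h = 0" by (rule H[rule_format, OF pg ph muprod])
  moreover have dg: "degree g = m" unfolding g_def using degree_prod_lin[OF finOrb] cardOrb by simp
  ultimately have "degree h = 0" using m by simp
  moreover have "degree h = card (roots \<mu> - Orb)" unfolding h_def
    using degree_prod_lin[of "roots \<mu> - Orb"] finR by blast
  ultimately have "card (roots \<mu> - Orb) = 0" by simp
  then have RO: "roots \<mu> = Orb" using Orbsub finR by auto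
  have dm: "degree \<mu> = m" using split_card[OF AC mu] RO cardOrb by simp
  show "roots \<mu> = (\<lambda>i. z ^ (q ^ i)) ` {..<degree \<mu>}" using RO dm Orb_def by simp
  show "\<forall>j. z ^ (q ^ j) = z \<longleftrightarrow> degree \<mu> dvd j"
    using fr_period_dvd[OF pr ch qd m(2) mmin m(1)] dm by simp
qed

end

lemma roots_nonzero: "\<mu> \<in> FX0 \<Longrightarrow> z \<in> roots \<mu> \<Longrightarrow> (z::'a::field) \<noteq> 0"
  unfolding FX0_def roots_def by (auto simp: poly_0_coeff_0)

lemma roots_star:
  assumes "finite (roots (\<mu>::'a::field poly))"
  shows "roots (mu_star a \<mu>) = (\<lambda>z. a / z) ` roots \<mu>"
  using assms unfolding mu_star_def roots_def[of "prod _ _"]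
  by (auto simp: poly_prod prod_zero_iff)

lemma roots_neg:
  assumes "finite (roots (\<mu>::'a::field poly))"
  shows "roots (mu_neg \<mu>) = uminus ` roots \<mu>"
  using assms unfolding mu_neg_def roots_def[of "prod _ _"]
  by (auto simp: poly_prod prod_zero_iff add_eq_0_iff)

lemma invol_pairs:
  fixes S :: "'a::field set" and a :: 'a
  assumes "finite S" "0 \<notin> S" "a \<noteq> 0" "\<forall>z\<in>S. a / z \<in> S" "\<forall>z\<in>S. z ^ 2 \<noteq> a"
  shows "\<exists>e. card S = 2 * e \<and> \<Prod>S = a ^ e"
  using assms
proof (induction "card S" arbitrary: S rule: less_induct)
  case less
  show ?case
  proof (cases "S = {}")
    case True then show ?thesis by (intro exI[of _ 0]) simp
  next
    case False
    then obtain z where z: "z \<in> S" by blast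
    define w where "w = a / z"
    have z0: "z \<noteq> 0" using z less.prems by auto
    have w: "w \<in> S" using z less.prems w_def by auto
    have wz: "w \<noteq> z"
    proof
      assume "w = z"
      then have "z * z = a" using z0 unfolding w_def by (simp add: field_simps)
      then show False using less.prems z by (simp add: power2_eq_square)
    qed
    define S' where "S' = S - {z, w}"
    have cardS: "card S = Suc (Suc (card S'))"
      unfolding S'_def using less.prems(1) z w wz
      by (metis card_Diff_insert card_Diff_singleton card_Suc_Diff1 finite_Diff insert_Diff insert_iff
          Diff_insert2 insert_absorb)
    have cl: "\<forall>y\<in>S'. a / y \<in> S'"
    proof
      fix y assume y: "y \<in> S'"
      have y0: "y \<noteq> 0" using y less.prems unfolding S'_def by auto
      have "a / y \<in> S" using y less.prems unfolding S'_def by auto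
      moreover have "a / y \<noteq> z"
      proof
        assume "a / y = z" then have "y = w" unfolding w_def using y0 less.prems(3) z0
          by (auto simp: field_simps)
        then show False using y unfolding S'_def by auto
      qed
      moreover have "a / y \<noteq> w"
      proof
        assume "a / y = w" then have "y = z" unfolding w_def using y0 less.prems(3) z0
          by (auto simp: field_simps)
        then show False using y unfolding S'_def by auto
      qed
      ultimately show "a / y \<in> S'" unfolding S'_def by auto
    qed
    have "card S' < card S" using cardS by simp
    then obtain e where e: "card S' = 2 * e" "\<Prod>S' = a ^ e"
      using less.hyps[of S'] less.prems cl unfolding S'_def by auto
    have "\<Prod>S = z * w * \<Prod>S'"
    proof -
      have "\<Prod>S = z * \<Prod>(S - {z})" using less.prems(1) z by (simp add: prod.remove)
      also have "\<Prod>(S - {z}) = w * \<Prod>(S - {z} - {w})"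
        using less.prems(1) w wz by (simp add: prod.remove)
      also have "S - {z} - {w} = S'" unfolding S'_def by blast
      finally show ?thesis by (simp only: mult.assoc)
    qed
    also have "z * w = a" unfolding w_def using z0 by simp
    finally have "\<Prod>S = a ^ Suc e" using e by simp
    moreover have "card S = 2 * Suc e" using cardS e by simp
    ultimately show ?thesis by blast
  qed
qed


context
  fixes p q n :: nat
  assumes pr: "prime p" and ch: "CHAR('a::field) = p" and qd: "q = p ^ n"
    and AC: "\<forall>g::'a poly. degree g > 0 \<longrightarrow> (\<exists>x. poly g x = 0)"
    and alg: "\<forall>x :: 'a. \<exists>k>0. x ^ (p ^ k) = x" and n1: "n \<ge> 1"
begin

lemma root_orbit:
  assumes mu: "(\<mu>::'a poly) \<in> FX0" and irr: "irreducible_over q \<mu>" and w: "w \<in> roots \<mu>"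
  shows "roots \<mu> = (\<lambda>i. w ^ (q ^ i)) ` {..<degree \<mu>}"
    and "\<forall>j. w ^ (q ^ j) = w \<longleftrightarrow> degree \<mu> dvd j"
  using orbit[OF pr ch qd AC alg n1 mu irr] w unfolding roots_def by auto

lemma invol:
  assumes mu: "(\<mu>::'a poly) \<in> FX0" and irr: "irreducible_over q \<mu>" and w: "w \<in> roots \<mu>"
    and c: "c \<in> Fq q" "c \<noteq> 0" and cw: "c / w \<in> roots \<mu>"
  shows "\<exists>k<degree \<mu>. c / w = w ^ (q ^ k) \<and> degree \<mu> dvd 2 * k"
proof -
  obtain k where k: "k < degree \<mu>" "c / w = w ^ (q ^ k)"
    using root_orbit(1)[OF mu irr w] cw by auto
  have w0: "w \<noteq> 0" using roots_nonzero[OF mu w] .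
  have "w ^ (q ^ (k + k)) = (w ^ (q ^ k)) ^ (q ^ k)" by (rule fr_add[OF pr ch qd])
  also have "\<dots> = (c / w) ^ (q ^ k)" using k by simp
  also have "\<dots> = c ^ (q ^ k) / w ^ (q ^ k)" by (rule power_divide)
  also have "\<dots> = c / (c / w)" using k Fq_iter[OF pr ch qd c(1)] by simp
  also have "\<dots> = w" using w0 c(2) by simp
  finally have "w ^ (q ^ (2 * k)) = w" by (simp add: mult_2)
  then have "degree \<mu> dvd 2 * k" using root_orbit(2)[OF mu irr w] by blast
  then show ?thesis using k by blast
qed

lemma SQ:
  assumes mu: "(\<mu>::'a poly) \<in> FX0" and irr: "irreducible_over q \<mu>" and w: "w \<in> roots \<mu>"
    and w2: "w ^ 2 \<in> Fq q"
  shows "(degree \<mu> = 1 \<and> roots \<mu> = {w} \<and> w \<in> Fq q \<and> \<mu> = [:- w, 1:] \<and> mu_neg \<mu> = [:w, 1:])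
       \<or> (degree \<mu> = 2 \<and> w \<in> Fq (q ^ 2) - Fq q \<and> \<mu> = [:- (w ^ 2), 0, 1:] \<and> mu_neg \<mu> = \<mu>)"
proof -
  have per: "\<forall>j. w ^ (q ^ j) = w \<longleftrightarrow> degree \<mu> dvd j" using root_orbit(2)[OF mu irr w] .
  have R: "roots \<mu> = (\<lambda>i. w ^ (q ^ i)) ` {..<degree \<mu>}" using root_orbit(1)[OF mu irr w] .
  have sp: "\<mu> = (\<Prod>r\<in>roots \<mu>. [:- r, 1:])" by (rule split_poly[OF AC mu])
  have dpos: "degree \<mu> > 0" using irr by (simp add: irreducible_over_def)
  have "(w ^ q) ^ 2 = (w ^ 2) ^ q" by (simp only: power_mult[symmetric] mult.commute)
  also have "\<dots> = w ^ 2" using w2 by (simp add: Fq_def)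
  finally have "w ^ q = w \<or> w ^ q = - w" by (simp add: power2_eq_iff)
  then consider "w ^ q = w" | "w ^ q = - w" "w ^ q \<noteq> w" by blast
  then show ?thesis
  proof cases
    case 1
    then have "degree \<mu> dvd 1" using per[rule_format, of 1] by simp
    then have d1: "degree \<mu> = 1" by simp
    have Rw: "roots \<mu> = {w}" using R d1 by (simp add: lessThan_Suc)
    have "\<mu> = [:- w, 1:]" using sp Rw by simp
    moreover have "mu_neg \<mu> = [:w, 1:]" unfolding mu_neg_def Rw by simp
    moreover have "w \<in> Fq q" using 1 by (simp add: Fq_def)
    ultimately show ?thesis using d1 Rw by blast
  next
    case 2
    have wq2: "w ^ (q ^ 2) = w"
    proof -
      have "w ^ (q ^ 2) = (w ^ q) ^ q" by (simp add: power2_eq_square power_mult)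
      also have "\<dots> = - (w ^ q)" using 2 frob_neg[OF pr ch qd] by simp
      finally show ?thesis using 2 by simp
    qed
    have "degree \<mu> dvd 2" using per wq2 by blast
    then have "degree \<mu> \<le> 2" by (rule dvd_imp_le) simp
    moreover have "\<not> degree \<mu> dvd 1" using per[rule_format, of 1] 2 by simp
    then have "degree \<mu> \<noteq> 1" by auto
    ultimately have d2: "degree \<mu> = 2" using dpos by linarith
    have wn: "w \<noteq> - w" using 2 by auto
    have Rw: "roots \<mu> = {w, - w}" using R d2 2
      by (simp add: numeral_2_eq_2 lessThan_Suc insert_commute)
    have "\<mu> = [:- w, 1:] * [:w, 1:]" using sp Rw wn by simp
    also have "\<dots> = [:- (w ^ 2), 0, 1:]" by (simp add: power2_eq_square)
    finally have m: "\<mu> = [:- (w ^ 2), 0, 1:]" .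
    have "mu_neg \<mu> = [:w, 1:] * [:- w, 1:]" unfolding mu_neg_def Rw using wn by simp
    also have "\<dots> = [:- (w ^ 2), 0, 1:]" by (simp add: power2_eq_square)
    finally have "mu_neg \<mu> = \<mu>" using m by simp
    moreover have "w \<in> Fq (q ^ 2) - Fq q" using wq2 2 by (simp add: Fq_def)
    ultimately show ?thesis using d2 m by blast
  qed
qed

end

lemma two_k_eq: "0 < k \<Longrightarrow> k < d \<Longrightarrow> (d::nat) dvd 2 * k \<Longrightarrow> 2 * k = d"
proof -
  assume a: "0 < k" "k < d" "d dvd 2 * k"
  then obtain t where t: "2 * k = d * t" by (auto elim: dvdE)
  have "t \<noteq> 0"
  proof
    assume "t = 0" then show False using t a by simp
  qed
  moreover have "t < 2"
  proof (rule ccontr)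
    assume "\<not> t < 2"
    then have "d * t \<ge> d * 2" by simp
    then show False using t a by linarith
  qed
  ultimately have "t = 1" by linarith
  then show ?thesis using t by simp
qed

lemma k_zero_odd: "k < d \<Longrightarrow> odd d \<Longrightarrow> (d::nat) dvd 2 * k \<Longrightarrow> k = 0"
proof -
  assume a: "k < d" "odd d" "d dvd 2 * k"
  show "k = 0"
  proof (rule ccontr)
    assume "k \<noteq> 0"
    then have "2 * k = d" using two_k_eq a by simp
    then show False using a(2) by (metis dvd_triv_left)
  qed
qed

context
  fixes p q n :: nat
  assumes pr: "prime p" and ch: "CHAR('a::field) = p" and qd: "q = p ^ n"
    and AC: "\<forall>g::'a poly. degree g > 0 \<longrightarrow> (\<exists>x. poly g x = 0)"
    and alg: "\<forall>x :: 'a. \<exists>k>0. x ^ (p ^ k) = x" and n1: "n \<ge> 1"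
begin

lemma Fq_neg: "(a::'a) \<in> Fq q \<Longrightarrow> - a \<in> Fq q"
  unfolding Fq_def using frob_neg[OF pr ch qd] by simp

lemma even_q_char2: "even q \<Longrightarrow> p = 2"
proof -
  assume "even q"
  then have "even p" using qd n1 by simp
  then have "2 dvd p" by simp
  then show "p = 2" using pr unfolding prime_nat_iff by force
qed

lemma two_ne0: "odd q \<Longrightarrow> (2::'a) \<noteq> 0"
proof
  assume o: "odd q" and t: "(2::'a) = 0"
  have "of_nat 2 = (0::'a)" using t by simp
  then have "p dvd 2" using ch of_nat_eq_0_iff_char_dvd by metis
  then have "p = 2" using prime_ge_2_nat[OF pr] dvd_imp_le[of p 2] by simp
  then show False using o qd n1 by simp
qed

lemma L0: assumes "(z::'a) \<notin> Fq q" "z ^ 2 \<in> Fq q" shows "odd q"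
proof (rule ccontr)
  assume "\<not> odd q"
  then have "p = 2" using even_q_char2 by simp
  then have c2: "CHAR('a) = 2" using ch by simp
  have "(z ^ q) ^ 2 = (z ^ 2) ^ q" by (simp only: power_mult[symmetric] mult.commute)
  also have "\<dots> = z ^ 2" using assms(2) by (simp add: Fq_def)
  finally have "z ^ q = z \<or> z ^ q = - z" by (simp add: power2_eq_iff)
  then have "z ^ q = z" using uminus_CHAR_2[OF c2, of z] by auto
  then show False using assms(1) by (simp add: Fq_def)
qed

end

theorem lemma4p1:
  fixes \<mu> :: "'a::field poly" and \<alpha> :: 'a and p q n d :: nat
  assumes F: "alg_closure_of_Fp TYPE('a) p"
    and q: "q = p ^ n" and n: "n \<ge> 1"
    and \<alpha>: "\<alpha> \<in> Fq q" "\<alpha> \<noteq> 0"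
    and \<mu>: "poly_over q \<mu>" "\<mu> \<in> FX0"
    and d: "d = degree \<mu>"
  shows
    "(\<mu> = mu_star \<alpha> \<mu> \<and> (\<forall>z\<in>roots \<mu>. z ^ 2 \<noteq> \<alpha>) \<longrightarrow>
        (\<exists>e. d = 2 * e \<and> (\<Prod>z\<in>roots \<mu>. z) = \<alpha> ^ e))
     \<and>
     (\<mu> = mu_star \<alpha> \<mu> \<and> irreducible_over q \<mu> \<longrightarrow>
        (
         (\<exists>z\<in>Fq q. \<alpha> = z ^ 2 \<and> \<mu> = [:- z, 1:] \<and> mu_neg \<mu> = [:z, 1:])
         \<or>
         (\<exists>z\<in>Fq (q ^ 2) - Fq q. \<alpha> = z ^ 2 \<and> \<mu> = [:- \<alpha>, 0, 1:] \<and> mu_neg \<mu> = \<mu>)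
         \<or>
         (\<exists>z\<in>Fq (q ^ 2) - Fq q. \<alpha> = - (z ^ 2) \<and> \<mu> = [:\<alpha>, 0, 1:] \<and> mu_neg \<mu> = \<mu>)
         \<or>
         ((\<forall>z\<in>roots \<mu>. \<alpha> \<noteq> z ^ 2 \<and> \<alpha> \<noteq> - (z ^ 2)) \<and>
          (\<exists>e. d = 2 * e \<and> (\<forall>z\<in>roots \<mu>. z ^ (q ^ e) = \<alpha> / z)) \<and>
          (odd q \<longrightarrow> \<mu> \<noteq> mu_neg \<mu>))
        )
        \<and>
        ((\<exists>z\<in>Fq (q ^ 2) - Fq q. \<alpha> = z ^ 2 \<and> \<mu> = [:- \<alpha>, 0, 1:] \<and> mu_neg \<mu> = \<mu>)
         \<or> (\<exists>z\<in>Fq (q ^ 2) - Fq q. \<alpha> = - (z ^ 2) \<and> \<mu> = [:\<alpha>, 0, 1:] \<and> mu_neg \<mu> = \<mu>)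
         \<longrightarrow> odd q))
     \<and>
     (irreducible_over q \<mu> \<and> odd d \<and> odd q \<and> mu_neg \<mu> = mu_star \<alpha> \<mu> \<longrightarrow>
        (\<exists>b\<in>Fq q. - \<alpha> = b ^ 2))"
proof -
  have pr: "prime p" and ch: "CHAR('a) = p"
    and AC: "\<forall>g::'a poly. degree g > 0 \<longrightarrow> (\<exists>x. poly g x = 0)"
    and alg: "\<forall>x :: 'a. \<exists>k>0. x ^ (p ^ k) = x"
    using F unfolding alg_closure_of_Fp_def by auto
  note stp = pr ch q AC alg n
  have mu0: "\<mu> \<noteq> 0" using \<mu>(2) by (auto simp: FX0_def)
  have finR: "finite (roots \<mu>)" using mu0 by (rule roots_finite)
  have r0: "\<And>z. z \<in> roots \<mu> \<Longrightarrow> z \<noteq> 0" using roots_nonzero[OF \<mu>(2)] by blast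
  have dcard: "d = card (roots \<mu>)" using split_card[OF AC \<mu>(2)] d by simp
  have clos: "\<And>w. \<mu> = mu_star \<alpha> \<mu> \<Longrightarrow> w \<in> roots \<mu> \<Longrightarrow> \<alpha> / w \<in> roots \<mu>"
  proof -
    fix w assume e: "\<mu> = mu_star \<alpha> \<mu>" and w: "w \<in> roots \<mu>"
    have "\<alpha> / w \<in> roots (mu_star \<alpha> \<mu>)" using roots_star[OF finR] w by auto
    then show "\<alpha> / w \<in> roots \<mu>" using e by simp
  qed
  have nA: "- \<alpha> \<in> Fq q" using Fq_neg[OF stp \<alpha>(1)] .
  have Lpart: "((\<exists>z\<in>Fq (q ^ 2) - Fq q. \<alpha> = z ^ 2 \<and> \<mu> = [:- \<alpha>, 0, 1:] \<and> mu_neg \<mu> = \<mu>)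
         \<or> (\<exists>z\<in>Fq (q ^ 2) - Fq q. \<alpha> = - (z ^ 2) \<and> \<mu> = [:\<alpha>, 0, 1:] \<and> mu_neg \<mu> = \<mu>)
         \<longrightarrow> odd q)"
  proof
    assume "(\<exists>z\<in>Fq (q ^ 2) - Fq q. \<alpha> = z ^ 2 \<and> \<mu> = [:- \<alpha>, 0, 1:] \<and> mu_neg \<mu> = \<mu>)
         \<or> (\<exists>z\<in>Fq (q ^ 2) - Fq q. \<alpha> = - (z ^ 2) \<and> \<mu> = [:\<alpha>, 0, 1:] \<and> mu_neg \<mu> = \<mu>)"
    then have "\<exists>z::'a. z \<notin> Fq q \<and> z ^ 2 \<in> Fq q"
    proof (elim disjE bexE conjE)
      fix z assume "z \<in> Fq (q ^ 2) - Fq q" "\<alpha> = z ^ 2"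
      then show ?thesis using \<alpha>(1) by auto
    next
      fix z assume "z \<in> Fq (q ^ 2) - Fq q" "\<alpha> = - (z ^ 2)"
      then show ?thesis using nA by auto
    qed
    then obtain z :: 'a where z: "z \<notin> Fq q" "z ^ 2 \<in> Fq q" by blast
    show "odd q" by (rule L0[OF stp z])
  qed
  have part1: "\<mu> = mu_star \<alpha> \<mu> \<and> (\<forall>z\<in>roots \<mu>. z ^ 2 \<noteq> \<alpha>) \<longrightarrow>
        (\<exists>e. d = 2 * e \<and> (\<Prod>z\<in>roots \<mu>. z) = \<alpha> ^ e)"
  proof
    assume h: "\<mu> = mu_star \<alpha> \<mu> \<and> (\<forall>z\<in>roots \<mu>. z ^ 2 \<noteq> \<alpha>)"
    have "\<exists>e. card (roots \<mu>) = 2 * e \<and> \<Prod>(roots \<mu>) = \<alpha> ^ e"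
      using invol_pairs[OF finR _ \<alpha>(2)] h clos r0 by blast
    then show "\<exists>e. d = 2 * e \<and> (\<Prod>z\<in>roots \<mu>. z) = \<alpha> ^ e" using dcard by simp
  qed
  have part2: "\<mu> = mu_star \<alpha> \<mu> \<and> irreducible_over q \<mu> \<longrightarrow>
         (\<exists>z\<in>Fq q. \<alpha> = z ^ 2 \<and> \<mu> = [:- z, 1:] \<and> mu_neg \<mu> = [:z, 1:])
         \<or>
         (\<exists>z\<in>Fq (q ^ 2) - Fq q. \<alpha> = z ^ 2 \<and> \<mu> = [:- \<alpha>, 0, 1:] \<and> mu_neg \<mu> = \<mu>)
         \<or>
         (\<exists>z\<in>Fq (q ^ 2) - Fq q. \<alpha> = - (z ^ 2) \<and> \<mu> = [:\<alpha>, 0, 1:] \<and> mu_neg \<mu> = \<mu>)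
         \<or>
         ((\<forall>z\<in>roots \<mu>. \<alpha> \<noteq> z ^ 2 \<and> \<alpha> \<noteq> - (z ^ 2)) \<and>
          (\<exists>e. d = 2 * e \<and> (\<forall>z\<in>roots \<mu>. z ^ (q ^ e) = \<alpha> / z)) \<and>
          (odd q \<longrightarrow> \<mu> \<noteq> mu_neg \<mu>))"
  proof
    assume h: "\<mu> = mu_star \<alpha> \<mu> \<and> irreducible_over q \<mu>"
    then have eq: "\<mu> = mu_star \<alpha> \<mu>" and irr: "irreducible_over q \<mu>" by auto
    have dpos: "d > 0" using irr d by (simp add: irreducible_over_def)
    show "(\<exists>z\<in>Fq q. \<alpha> = z ^ 2 \<and> \<mu> = [:- z, 1:] \<and> mu_neg \<mu> = [:z, 1:])
         \<or>
         (\<exists>z\<in>Fq (q ^ 2) - Fq q. \<alpha> = z ^ 2 \<and> \<mu> = [:- \<alpha>, 0, 1:] \<and> mu_neg \<mu> = \<mu>)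
         \<or>
         (\<exists>z\<in>Fq (q ^ 2) - Fq q. \<alpha> = - (z ^ 2) \<and> \<mu> = [:\<alpha>, 0, 1:] \<and> mu_neg \<mu> = \<mu>)
         \<or>
         ((\<forall>z\<in>roots \<mu>. \<alpha> \<noteq> z ^ 2 \<and> \<alpha> \<noteq> - (z ^ 2)) \<and>
          (\<exists>e. d = 2 * e \<and> (\<forall>z\<in>roots \<mu>. z ^ (q ^ e) = \<alpha> / z)) \<and>
          (odd q \<longrightarrow> \<mu> \<noteq> mu_neg \<mu>))"
    proof (cases "\<exists>w\<in>roots \<mu>. \<alpha> = w ^ 2")
      case True
      then obtain w where w: "w \<in> roots \<mu>" "\<alpha> = w ^ 2" by blast
      have "w ^ 2 \<in> Fq q" using w \<alpha>(1) by simp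
      from SQ[OF stp \<mu>(2) irr w(1) this] show ?thesis
      proof
        assume c: "degree \<mu> = 1 \<and> roots \<mu> = {w} \<and> w \<in> Fq q \<and> \<mu> = [:- w, 1:] \<and> mu_neg \<mu> = [:w, 1:]"
        then show ?thesis using w by blast
      next
        assume c: "degree \<mu> = 2 \<and> w \<in> Fq (q ^ 2) - Fq q \<and> \<mu> = [:- (w ^ 2), 0, 1:] \<and> mu_neg \<mu> = \<mu>"
        then show ?thesis using w by auto
      qed
    next
      case nA1: False
      show ?thesis
      proof (cases "\<exists>w\<in>roots \<mu>. \<alpha> = - (w ^ 2)")
        case True
        then obtain w where w: "w \<in> roots \<mu>" "\<alpha> = - (w ^ 2)" by blast
        have "w ^ 2 \<in> Fq q" using w nA by simp
        from SQ[OF stp \<mu>(2) irr w(1) this] show ?thesis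
        proof
          assume c: "degree \<mu> = 1 \<and> roots \<mu> = {w} \<and> w \<in> Fq q \<and> \<mu> = [:- w, 1:] \<and> mu_neg \<mu> = [:w, 1:]"
          have "\<alpha> / w \<in> roots \<mu>" using clos[OF eq w(1)] .
          moreover have "roots \<mu> = {w}" using c by blast
          ultimately have "\<alpha> / w = w" by blast
          then have "\<alpha> = w ^ 2" using r0[OF w(1)] by (simp add: field_simps power2_eq_square)
          then show ?thesis using c by blast
        next
          assume c: "degree \<mu> = 2 \<and> w \<in> Fq (q ^ 2) - Fq q \<and> \<mu> = [:- (w ^ 2), 0, 1:] \<and> mu_neg \<mu> = \<mu>"
          then show ?thesis using w by auto
        qed
      next
        case nB1: False
        have kk: "\<exists>k. 0 < k \<and> 2 * k = d \<and> w ^ (q ^ k) = \<alpha> / w" if w: "w \<in> roots \<mu>" for w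
        proof -
          obtain k where k: "k < degree \<mu>" "\<alpha> / w = w ^ (q ^ k)" "degree \<mu> dvd 2 * k"
            using invol[OF stp \<mu>(2) irr w \<alpha> clos[OF eq w]] by blast
          have "k \<noteq> 0"
          proof
            assume "k = 0"
            then have "\<alpha> / w = w" using k by simp
            then have "\<alpha> = w ^ 2" using r0[OF w] by (simp add: field_simps power2_eq_square)
            then show False using nA1 w by blast
          qed
          then have "2 * k = d" using two_k_eq[of k "degree \<mu>"] k d by simp
          then show ?thesis using k \<open>k \<noteq> 0\<close> by auto
        qed
        obtain z0 where z0: "poly \<mu> z0 = 0" using AC dpos d by auto
        then have z0r: "z0 \<in> roots \<mu>" by (simp add: roots_def)
        obtain e where e: "0 < e" "2 * e = d" using kk[OF z0r] by blast
        have allw: "\<forall>z\<in>roots \<mu>. z ^ (q ^ e) = \<alpha> / z"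
        proof
          fix w assume w: "w \<in> roots \<mu>"
          obtain k where k: "0 < k" "2 * k = d" "w ^ (q ^ k) = \<alpha> / w" using kk[OF w] by blast
          then have "k = e" using e by simp
          then show "w ^ (q ^ e) = \<alpha> / w" using k by simp
        qed
        have noneg: "odd q \<longrightarrow> \<mu> \<noteq> mu_neg \<mu>"
        proof (intro impI notI)
          assume oq: "odd q" and e2: "\<mu> = mu_neg \<mu>"
          have "- z0 \<in> roots (mu_neg \<mu>)" using roots_neg[OF finR] z0r by auto
          then have nz: "- z0 \<in> roots \<mu>" using e2 by simp
          obtain j where j: "j < degree \<mu>" "- z0 = z0 ^ (q ^ j)"
            using root_orbit(1)[OF stp \<mu>(2) irr z0r] nz by auto
          have "z0 ^ (q ^ (j + j)) = (z0 ^ (q ^ j)) ^ (q ^ j)" by (rule fr_add[OF pr ch q])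
          also have "\<dots> = (- z0) ^ (q ^ j)" using j by simp
          also have "\<dots> = - (z0 ^ (q ^ j))" by (rule frob_iter_neg[OF pr ch q])
          also have "\<dots> = z0" using j(2) by (metis minus_minus)
          finally have "z0 ^ (q ^ (2 * j)) = z0" by (simp add: mult_2)
          then have dv: "degree \<mu> dvd 2 * j" using root_orbit(2)[OF stp \<mu>(2) irr z0r] by blast
          show False
          proof (cases "j = 0")
            case True
            then have "- z0 = z0" using j by simp
            then have "2 * z0 = z0 + (- z0)" by (metis mult_2)
            then have "2 * z0 = 0" by (simp only: add.right_inverse)
            then show False using two_ne0[OF stp oq] r0[OF z0r] by simp
          next
            case False
            then have "2 * j = d" using two_k_eq[of j "degree \<mu>"] j dv d by simp
            then have "j = e" using e by simp
            then have "- z0 = \<alpha> / z0" using j allw z0r by simp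
            then have "\<alpha> = - (z0 ^ 2)" using r0[OF z0r] by (simp add: field_simps power2_eq_square)
            then show False using nB1 z0r by blast
          qed
        qed
        have "(\<forall>z\<in>roots \<mu>. \<alpha> \<noteq> z ^ 2 \<and> \<alpha> \<noteq> - (z ^ 2))" using nA1 nB1 by blast
        moreover have "\<exists>e. d = 2 * e \<and> (\<forall>z\<in>roots \<mu>. z ^ (q ^ e) = \<alpha> / z)" using e allw by auto
        ultimately show ?thesis using noneg by blast
      qed
    qed
  qed
  have part3: "irreducible_over q \<mu> \<and> odd d \<and> odd q \<and> mu_neg \<mu> = mu_star \<alpha> \<mu> \<longrightarrow>
        (\<exists>b\<in>Fq q. - \<alpha> = b ^ 2)"
  proof
    assume h: "irreducible_over q \<mu> \<and> odd d \<and> odd q \<and> mu_neg \<mu> = mu_star \<alpha> \<mu>"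
    then have irr: "irreducible_over q \<mu>" and od: "odd d" and eqb: "mu_neg \<mu> = mu_star \<alpha> \<mu>" by auto
    have dpos: "d > 0" using irr d by (simp add: irreducible_over_def)
    obtain z0 where z0: "poly \<mu> z0 = 0" using AC dpos d by auto
    then have z0r: "z0 \<in> roots \<mu>" by (simp add: roots_def)
    have z00: "z0 \<noteq> 0" using r0[OF z0r] .
    have "- z0 \<in> roots (mu_neg \<mu>)" using roots_neg[OF finR] z0r by auto
    then have "- z0 \<in> (\<lambda>z. \<alpha> / z) ` roots \<mu>" using eqb roots_star[OF finR] by simp
    then obtain w where w: "w \<in> roots \<mu>" "- z0 = \<alpha> / w" by blast
    have w0: "w \<noteq> 0" using r0[OF w(1)] .
    have "- (w * z0) = \<alpha>" using w(2) w0 z00 by (simp add: field_simps)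
    then have "w * z0 = - \<alpha>" by (metis minus_minus)
    then have "w = - \<alpha> / z0" using z00 by (simp add: field_simps)
    then have cw: "- \<alpha> / z0 \<in> roots \<mu>" using w(1) by simp
    have na0: "- \<alpha> \<noteq> 0" using \<alpha>(2) by simp
    obtain k where k: "k < degree \<mu>" "- \<alpha> / z0 = z0 ^ (q ^ k)" "degree \<mu> dvd 2 * k"
      using invol[OF stp \<mu>(2) irr z0r nA na0 cw] by blast
    have "k = 0" using k_zero_odd[of k "degree \<mu>"] k od d by simp
    then have "- \<alpha> / z0 = z0" using k by simp
    then have sq: "- \<alpha> = z0 ^ 2" using z00 by (simp add: field_simps power2_eq_square)
    then have "z0 ^ 2 \<in> Fq q" using nA by simp
    from SQ[OF stp \<mu>(2) irr z0r this] show "\<exists>b\<in>Fq q. - \<alpha> = b ^ 2"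
    proof
      assume "degree \<mu> = 1 \<and> roots \<mu> = {z0} \<and> z0 \<in> Fq q \<and> \<mu> = [:- z0, 1:] \<and> mu_neg \<mu> = [:z0, 1:]"
      then show ?thesis using sq by blast
    next
      assume "degree \<mu> = 2 \<and> z0 \<in> Fq (q ^ 2) - Fq q \<and> \<mu> = [:- (z0 ^ 2), 0, 1:] \<and> mu_neg \<mu> = \<mu>"
      then show ?thesis using od d by simp
    qed
  qed
  show ?thesis using part1 part2 Lpart part3 by blast
qed


end
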